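(* Let $H$ be a finite simple graph on $n$ vertices, and let $KH_1,KH_2,\ldots,KH_s$ be the replication cliques of $H$ (in some chosen order), of sizes $y_1,\ldots,y_s\ge 1$. For $i=1,\ldots,s$ let $n_i$ denote the number of non-edges between a (any) vertex of $KH_i$ and the vertices of $KH_1\cup\cdots\cup KH_{i-1}$. Then $$\rho(H) \leq n+ \sum_{i=1}^s n_i.$$ Moreover, among all orderings of the replication cliques, the right-hand side is smallest when the ordering satisfies $y_1 \le y_2 \le \cdots \le y_s$.
   Context: All graphs are finite and simple. A coloring means a proper vertex coloring; an induced subgraph is rainbow if all its vertices have pairwise different colors. For a graph $H$, $\rho(H)$ is the least number $m$ such that there exists a graph $G$ on $m$ vertices such that every proper vertex coloring of $G$ contains a rainbow induced subgraph isomorphic to $H$. On $V(H)$ define $x\sim y$ iff $x=y$, or $xy$ is an edge of $H$ and $x,y$ have exactly the same neighbors in $H-\{x,y\}$; this is an equivalence relation whose classes are cliques, called the replication cliques of $H$. Since vertices in one replication clique have the same neighbors outside it, $n_i$ does not depend on the choice of vertex in $KH_i$. A non-edge is a pair of distinct non-adjacent vertices. *)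

theory Defs
  imports Main
begin

definition simple_graph :: "'a set \<Rightarrow> ('a \<Rightarrow> 'a \<Rightarrow> bool) \<Rightarrow> bool" where
  "simple_graph V E \<longleftrightarrow> finite V \<and> (\<forall>x y. E x y \<longrightarrow> x \<in> V \<and> y \<in> V)
     \<and> (\<forall>x y. E x y \<longrightarrow> E y x) \<and> (\<forall>x. \<not> E x x)"

definition proper_coloring :: "'b set \<Rightarrow> ('b \<Rightarrow> 'b \<Rightarrow> bool) \<Rightarrow> ('b \<Rightarrow> nat) \<Rightarrow> bool" where
  "proper_coloring VG EG c \<longleftrightarrow> (\<forall>x\<in>VG. \<forall>y\<in>VG. EG x y \<longrightarrow> c x \<noteq> c y)"

definition has_rainbow_induced_copy ::
  "'a set \<Rightarrow> ('a \<Rightarrow> 'a \<Rightarrow> bool) \<Rightarrow> 'b set \<Rightarrow> ('b \<Rightarrow> 'b \<Rightarrow> bool) \<Rightarrow> ('b \<Rightarrow> nat) \<Rightarrow> bool" where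
  "has_rainbow_induced_copy V E VG EG c \<longleftrightarrow>
     (\<exists>f. inj_on f V \<and> f ` V \<subseteq> VG \<and> (\<forall>x\<in>V. \<forall>y\<in>V. EG (f x) (f y) \<longleftrightarrow> E x y)
          \<and> inj_on (c \<circ> f) V)"

text \<open>rho(H): least m such that some graph G on m vertices (w.l.o.g. vertex set {0..<m})
  has the property that every proper colouring contains a rainbow induced copy of H.\<close>
definition rho :: "'a set \<Rightarrow> ('a \<Rightarrow> 'a \<Rightarrow> bool) \<Rightarrow> nat" where
  "rho V E = (LEAST m. \<exists>EG :: nat \<Rightarrow> nat \<Rightarrow> bool. simple_graph {..<m} EG \<and>
      (\<forall>c. proper_coloring {..<m} EG c \<longrightarrow> has_rainbow_induced_copy V E {..<m} EG c))"

definition repl :: "'a set \<Rightarrow> ('a \<Rightarrow> 'a \<Rightarrow> bool) \<Rightarrow> 'a \<Rightarrow> 'a \<Rightarrow> bool" where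
  "repl V E x y \<longleftrightarrow> x = y \<or> (E x y \<and> (\<forall>z\<in>V - {x, y}. E x z \<longleftrightarrow> E y z))"

definition repl_cliques :: "'a set \<Rightarrow> ('a \<Rightarrow> 'a \<Rightarrow> bool) \<Rightarrow> 'a set set" where
  "repl_cliques V E = {{y \<in> V. repl V E x y} | x. x \<in> V}"

text \<open>An ordering KH_1,...,KH_s of the replication cliques (list index i = KH_(i+1)).\<close>
definition repl_ordering :: "'a set \<Rightarrow> ('a \<Rightarrow> 'a \<Rightarrow> bool) \<Rightarrow> 'a set list \<Rightarrow> bool" where
  "repl_ordering V E Ks \<longleftrightarrow> distinct Ks \<and> set Ks = repl_cliques V E"

text \<open>n_i: number of non-edges between a vertex of Ks!i and the vertices of the
  earlier cliques (independent of the chosen vertex; we pick one via SOME).\<close>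
definition nonedges_before :: "('a \<Rightarrow> 'a \<Rightarrow> bool) \<Rightarrow> 'a set list \<Rightarrow> nat \<Rightarrow> nat" where
  "nonedges_before E Ks i =
     card {z \<in> \<Union> (set (take i Ks)). z \<noteq> (SOME v. v \<in> Ks ! i) \<and> \<not> E (SOME v. v \<in> Ks ! i) z}"

definition total_nonedges :: "('a \<Rightarrow> 'a \<Rightarrow> bool) \<Rightarrow> 'a set list \<Rightarrow> nat" where
  "total_nonedges E Ks = (\<Sum>i<length Ks. nonedges_before E Ks i)"

end

theory Submission
  imports Defs
begin

lemma sgE: assumes "simple_graph V E"
  shows "\<And>a b. E a b \<Longrightarrow> E b a" "\<And>a. \<not> E a a" "\<And>a b. E a b \<Longrightarrow> a \<in> V" "\<And>a b. E a b \<Longrightarrow> b \<in> V" "finite V"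
  using assms unfolding simple_graph_def by blast+

lemma repl_sym: assumes "simple_graph V E" "repl V E x y" shows "repl V E y x"
proof -
  have "{y,x} = {x,y}" by blast
  then show ?thesis using assms(2) sgE(1)[OF assms(1)] unfolding repl_def by metis
qed

lemma repl_trans: assumes sg: "simple_graph V E" and a: "repl V E x y" "repl V E y z" shows "repl V E x z"
proof (cases "x = y \<or> y = z \<or> x = z")
  case True
  then show ?thesis using a unfolding repl_def by auto
next
  case False
  then have xy: "E x y" "\<forall>w\<in>V-{x,y}. E x w = E y w" and yz: "E y z" "\<forall>w\<in>V-{y,z}. E y w = E z w"
    using a unfolding repl_def by auto
  have zV: "z \<in> V" using sgE(4)[OF sg] yz(1) by blast
  have "z \<in> V-{x,y}" using zV False by auto
  then have "E x z" using xy(2) yz(1) by blast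
  moreover have "\<forall>w\<in>V-{x,z}. E x w = E z w"
  proof
    fix w assume w: "w \<in> V-{x,z}"
    show "E x w = E z w"
    proof (cases "w = y")
      case True then show ?thesis using xy(1) yz(1) sgE(1)[OF sg] by auto
    next
      case False
      then have "w \<in> V-{x,y}" "w \<in> V-{y,z}" using w by auto
      then show ?thesis using xy(2) yz(2) by blast
    qed
  qed
  ultimately show ?thesis unfolding repl_def by blast
qed

lemma rc_sub: "K \<in> repl_cliques V E \<Longrightarrow> K \<subseteq> V" unfolding repl_cliques_def by auto

lemma rc_repl: assumes sg: "simple_graph V E" and K: "K \<in> repl_cliques V E" and "u \<in> K" "x \<in> K"
  shows "repl V E u x"
proof -
  obtain a where "a \<in> V" "K = {y\<in>V. repl V E a y}" using K unfolding repl_cliques_def by auto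
  then show ?thesis using assms repl_sym[OF sg] repl_trans[OF sg] by blast
qed

lemma rc_eq: assumes sg: "simple_graph V E" and K: "K \<in> repl_cliques V E" and K': "K' \<in> repl_cliques V E"
  and "x \<in> K" "x \<in> K'" shows "K = K'"
proof -
  have *: "y \<in> K2" if h: "K1 \<in> repl_cliques V E" "K2 \<in> repl_cliques V E" "x \<in> K1" "x \<in> K2" "y \<in> K1" for K1 K2 y
  proof -
    obtain a where a: "a \<in> V" "K2 = {y\<in>V. repl V E a y}" using h(2) unfolding repl_cliques_def by auto
    have "repl V E x y" using rc_repl[OF sg h(1) h(3) h(5)] .
    moreover have "repl V E a x" using a h(4) by auto
    moreover have "y \<in> V" using rc_sub[OF h(1)] h(5) by auto
    ultimately show ?thesis using a repl_trans[OF sg] by blast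
  qed
  show ?thesis using *[OF K K'] *[OF K' K] assms by blast
qed

lemma rc_nonempty: "K \<in> repl_cliques V E \<Longrightarrow> \<exists>x. x \<in> K"
  unfolding repl_cliques_def repl_def by auto

lemma rc_union: "\<Union>(repl_cliques V E) = V"
  unfolding repl_cliques_def repl_def by auto

lemma rc_clique: assumes sg: "simple_graph V E" and K: "K \<in> repl_cliques V E" and "u \<in> K" "x \<in> K" "u \<noteq> x"
  shows "E u x"
  using rc_repl[OF sg K assms(3,4)] assms(5) unfolding repl_def by auto

lemma rc_unif: assumes sg: "simple_graph V E" and K: "K \<in> repl_cliques V E" and K': "K' \<in> repl_cliques V E"
  and ne: "K \<noteq> K'" and u: "u \<in> K" "u' \<in> K" and x: "x \<in> K'" "x' \<in> K'"
  shows "E u x = E u' x'"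
proof -
  have disj: "z \<notin> K'" if "z \<in> K" for z using rc_eq[OF sg K K'] that ne by blast
  have 1: "E u x = E u' x"
  proof (cases "u = u'")
    case False
    then have "\<forall>z\<in>V-{u,u'}. E u z = E u' z" using rc_repl[OF sg K u] unfolding repl_def by auto
    moreover have "x \<in> V-{u,u'}" using rc_sub[OF K'] x disj u by auto
    ultimately show ?thesis by blast
  qed simp
  have 2: "E x u' = E x' u'"
  proof (cases "x = x'")
    case False
    then have "\<forall>z\<in>V-{x,x'}. E x z = E x' z" using rc_repl[OF sg K' x] unfolding repl_def by auto
    moreover have "u' \<in> V-{x,x'}" using rc_sub[OF K] x disj u by auto
    ultimately show ?thesis by blast
  qed simp
  have 3: "E u' x = E x u'" "E u' x' = E x' u'" using sgE(1)[OF sg] by blast+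
  show ?thesis using 1 2 3 by simp
qed

lemma rc_finite: assumes "simple_graph V E" "K \<in> repl_cliques V E" shows "finite K"
proof -
  have "K \<subseteq> V" by (rule rc_sub[OF assms(2)])
  moreover have "finite V" by (rule sgE(5)[OF assms(1)])
  ultimately show ?thesis by (rule finite_subset)
qed

lemma ord_disj: assumes sg: "simple_graph V E" and o: "repl_ordering V E L"
  and "i < length L" "j < length L" "i \<noteq> j" shows "L!i \<inter> L!j = {}"
proof -
  have d: "distinct L" and s: "set L = repl_cliques V E" using o unfolding repl_ordering_def by auto
  have "L!i \<in> repl_cliques V E" "L!j \<in> repl_cliques V E" using s assms(3,4) nth_mem by blast+
  moreover have "L!i \<noteq> L!j" using nth_eq_iff_index_eq[OF d assms(3,4)] assms(5) by simp
  ultimately show ?thesis using rc_eq[OF sg] by (metis disjoint_iff)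
qed

lemma ord_mem: "repl_ordering V E L \<Longrightarrow> i < length L \<Longrightarrow> L!i \<in> repl_cliques V E"
  unfolding repl_ordering_def using nth_mem by blast


lemma U_take: "k \<le> length L \<Longrightarrow> (z \<in> \<Union>(set (take k L))) = (\<exists>j<k. z \<in> L!j)"
  using nth_image[of k L, symmetric] by auto

lemma greedy:
  assumes sg: "simple_graph V E" and o: "repl_ordering V E Ks"
  and W_def: "W = Sigma V (\<lambda>v. {..<w v})"
  and wK: "\<And>k. k < length Ks \<Longrightarrow> card (Ks!k) + nonedges_before E Ks k \<le> (\<Sum>u\<in>Ks!k. w u)"
  and EW_def: "EW = (\<lambda>p q. E (fst p) (fst q) \<or> (fst p = fst q \<and> snd p \<noteq> snd q))"
  and pc: "proper_coloring W EW c"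
  shows "\<exists>f. (\<forall>x\<in>V. f x \<in> W) \<and> (\<forall>x\<in>V. \<forall>y\<in>V. EW (f x) (f y) = E x y) \<and> inj_on (c \<circ> f) V"
proof -
  have fV: "finite V" using sgE(5)[OF sg] .
  have pcW: "c p \<noteq> c q" if "p \<in> W" "q \<in> W" "EW p q" for p q
    using pc that unfolding proper_coloring_def by blast
  have claim: "k \<le> length Ks \<Longrightarrow> \<exists>f. (\<forall>j<k. \<forall>x\<in>Ks!j. f x \<in> W \<and> fst (f x) \<in> Ks!j) \<and> inj_on (c\<circ>f) (\<Union>(set (take k Ks)))" for k
  proof (induction k)
    case 0
    then show ?case by simp
  next
    case (Suc k)
    then have kl: "k < length Ks" by simp
    obtain f where f1: "\<forall>j<k. \<forall>x\<in>Ks!j. f x \<in> W \<and> fst (f x) \<in> Ks!j" and f2: "inj_on (c\<circ>f) (\<Union>(set (take k Ks)))"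
      using Suc.IH[OF Suc_leD[OF Suc.prems]] by blast
    define K where "K = Ks!k"
    define U where "U = \<Union>(set (take k Ks))"
    define v0 where "v0 = (SOME v. v \<in> K)"
    have KC: "K \<in> repl_cliques V E" using ord_mem[OF o kl] K_def by simp
    have v0K: "v0 \<in> K" unfolding v0_def using rc_nonempty[OF KC] by (rule someI_ex)
    have KV: "K \<subseteq> V" using rc_sub[OF KC] .
    have fK: "finite K" using rc_finite[OF sg KC] .
    have Umem: "(z \<in> U) = (\<exists>j<k. z \<in> Ks!j)" for z unfolding U_def using U_take[of k Ks z] kl by simp
    have disj: "z \<notin> K" if "z \<in> Ks!j" "j < k" for z j
      using ord_disj[OF sg o, of j k] that kl unfolding K_def by auto
    have UK: "U \<inter> K = {}" using Umem disj by blast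
    have UV: "U \<subseteq> V"
    proof
      fix z assume "z \<in> U"
      then obtain j where "j < k" "z \<in> Ks!j" using Umem by blast
      then show "z \<in> V" using rc_sub[OF ord_mem[OF o]] kl by (meson less_trans subsetD)
    qed
    have fU: "finite U" using UV fV finite_subset by blast
    define N where "N = {z \<in> U. z \<noteq> v0 \<and> \<not> E v0 z}"
    have cardN: "card N = nonedges_before E Ks k"
      unfolding N_def nonedges_before_def U_def v0_def K_def ..
    define F where "F = (c \<circ> f) ` N"
    have fF: "finite F" unfolding F_def N_def using fU by simp
    have cardF: "card F \<le> nonedges_before E Ks k"
      unfolding F_def using card_image_le[of N "c \<circ> f"] fU cardN N_def by simp
    define B where "B = Sigma K (\<lambda>v. {..<w v})"
    have BW: "B \<subseteq> W" unfolding B_def W_def using KV by auto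
    have fB: "finite B" unfolding B_def using fK by simp
    have cardB: "card B = (\<Sum>u\<in>K. w u)" unfolding B_def using fK by (simp add: card_SigmaI)
    have EWB: "EW p q" if "p \<in> B" "q \<in> B" "p \<noteq> q" for p q
    proof (cases "fst p = fst q")
      case True
      then have "snd p \<noteq> snd q" using that(3) by (simp add: prod_eq_iff)
      then show ?thesis using True unfolding EW_def by simp
    next
      case False
      have "fst p \<in> K" "fst q \<in> K" using that unfolding B_def by auto
      then have "E (fst p) (fst q)" using rc_clique[OF sg KC] False by blast
      then show ?thesis unfolding EW_def by simp
    qed
    have injB: "inj_on c B"
    proof (rule inj_onI)
      fix p q assume "p \<in> B" "q \<in> B" "c p = c q"
      then show "p = q" using EWB pcW BW by blast
    qed
    define A where "A = {p \<in> B. c p \<notin> F}"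
    have "card {p \<in> B. c p \<in> F} \<le> card F"
    proof (rule card_inj_on_le[OF _ _ fF])
      show "inj_on c {p \<in> B. c p \<in> F}" by (rule inj_on_subset[OF injB]) auto
    qed auto
    moreover have "card B = card A + card {p \<in> B. c p \<in> F}"
    proof -
      have "B = A \<union> {p \<in> B. c p \<in> F}" "A \<inter> {p \<in> B. c p \<in> F} = {}" unfolding A_def by auto
      moreover have "finite A" "finite {p \<in> B. c p \<in> F}" unfolding A_def using fB by auto
      ultimately show ?thesis using card_Un_disjoint by metis
    qed
    moreover have "card K + nonedges_before E Ks k \<le> card B" using wK[OF kl] cardB K_def by simp
    ultimately have "card K \<le> card A" using cardF by linarith
    moreover have "finite A" unfolding A_def using fB by (simp add: finite_subset)
    ultimately obtain g where gA: "g ` K \<subseteq> A" and ginj: "inj_on g K" using card_le_inj[OF fK] by blast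
    have gB: "g x \<in> B" if "x \<in> K" for x using gA that unfolding A_def by auto
    define f' where "f' = (\<lambda>x. if x \<in> K then g x else f x)"
    have a: "\<forall>j<Suc k. \<forall>x\<in>Ks!j. f' x \<in> W \<and> fst (f' x) \<in> Ks!j"
    proof (intro allI impI ballI)
      fix j x assume j: "j < Suc k" and x: "x \<in> Ks!j"
      show "f' x \<in> W \<and> fst (f' x) \<in> Ks!j"
      proof (cases "j < k")
        case True
        then show ?thesis using disj[OF x True] f1 x unfolding f'_def by auto
      next
        case False
        then have "j = k" using j by simp
        then have "x \<in> K" using x K_def by simp
        have "g x \<in> B" using gB \<open>x \<in> K\<close> .
        then have "g x \<in> W" "fst (g x) \<in> K" using BW unfolding B_def by auto
        then show ?thesis using \<open>j = k\<close> K_def \<open>x \<in> K\<close> unfolding f'_def by simp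
      qed
    qed
    have tk: "\<Union>(set (take (Suc k) Ks)) = U \<union> K"
      unfolding U_def K_def using take_Suc_conv_app_nth[OF kl] by (simp add: Un_commute)
    have i1: "inj_on (c \<circ> f') U"
    proof -
      have "(c \<circ> f') z = (c \<circ> f) z" if "z \<in> U" for z
        using that UK unfolding f'_def by auto
      then have "inj_on (c \<circ> f') U = inj_on (c \<circ> f) U" by (rule inj_on_cong)
      then show ?thesis using f2 unfolding U_def[symmetric] by simp
    qed
    have i2: "inj_on (c \<circ> f') K"
    proof -
      have "g ` K \<subseteq> B" using gB by blast
      then have "inj_on c (g ` K)" by (rule inj_on_subset[OF injB])
      then have "inj_on (c \<circ> g) K" by (rule comp_inj_on[OF ginj])
      then show ?thesis unfolding f'_def by (simp add: inj_on_def)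
    qed
    have i3: "c (f z) \<noteq> c (g x)" if z: "z \<in> U" and x: "x \<in> K" for z x
    proof (cases "z \<in> N")
      case True
      then have "c (f z) \<in> F" unfolding F_def by simp
      moreover have "g x \<in> A" using gA x by blast
      ultimately show ?thesis unfolding A_def by auto
    next
      case False
      obtain j where j: "j < k" "z \<in> Ks!j" using Umem z by blast
      have "z \<noteq> v0" using disj[OF j(2) j(1)] v0K by blast
      then have Ev: "E v0 z" using False z unfolding N_def by blast
      have fz: "f z \<in> W" "fst (f z) \<in> Ks!j" using f1 j by auto
      have gx: "g x \<in> W" "fst (g x) \<in> K" using gB[OF x] BW unfolding B_def by auto
      have jC: "Ks!j \<in> repl_cliques V E" using ord_mem[OF o] j kl by simp
      have ne: "K \<noteq> Ks!j" using disj[OF j(2) j(1)] j(2) by blast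
      have "E (fst (g x)) (fst (f z)) = E v0 z"
        using rc_unif[OF sg KC jC ne gx(2) v0K fz(2) j(2)] .
      then have "EW (g x) (f z)" using Ev unfolding EW_def by simp
      then show ?thesis using pcW[OF gx(1) fz(1)] by simp
    qed
    have "inj_on (c \<circ> f') (U \<union> K)"
    proof (rule inj_on_Un[THEN iffD2], intro conjI i1 i2)
      show "(c \<circ> f') ` (U - K) \<inter> (c \<circ> f') ` (K - U) = {}"
      proof (rule ccontr)
        assume "\<not> ?thesis"
        then obtain z x where "z \<in> U" "z \<notin> K" "x \<in> K" "c (f' z) = c (f' x)" by auto
        then show False using i3 unfolding f'_def by auto
      qed
    qed
    then have "inj_on (c \<circ> f') (\<Union>(set (take (Suc k) Ks)))" using tk by simp
    then show ?case using a by blast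
  qed
  obtain f where f1: "\<forall>j<length Ks. \<forall>x\<in>Ks!j. f x \<in> W \<and> fst (f x) \<in> Ks!j"
    and f2: "inj_on (c\<circ>f) (\<Union>(set (take (length Ks) Ks)))" using claim[of "length Ks"] by auto
  have setKs: "set Ks = repl_cliques V E" using o unfolding repl_ordering_def by simp
  have Vun: "\<Union>(set (take (length Ks) Ks)) = V" using rc_union[of V E] setKs by simp
  have memV: "\<exists>j<length Ks. x \<in> Ks!j" if "x \<in> V" for x
    using that Vun U_take[of "length Ks" Ks x] by simp
  have f2': "inj_on (c\<circ>f) V" using f2 Vun by simp
  have injf: "inj_on f V" using inj_on_imageI2[OF f2'] .
  have P1: "\<forall>x\<in>V. f x \<in> W" using memV f1 by blast
  have P2: "EW (f x) (f y) = E x y" if x: "x \<in> V" and y: "y \<in> V" for x y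
  proof -
    obtain i where i: "i < length Ks" "x \<in> Ks!i" using memV x by blast
    obtain j where j: "j < length Ks" "y \<in> Ks!j" using memV y by blast
    have iC: "Ks!i \<in> repl_cliques V E" using ord_mem[OF o i(1)] .
    have jC: "Ks!j \<in> repl_cliques V E" using ord_mem[OF o j(1)] .
    have fx: "fst (f x) \<in> Ks!i" and fy: "fst (f y) \<in> Ks!j" using f1 i j by auto
    show ?thesis
    proof (cases "i = j")
      case True
      show ?thesis
      proof (cases "x = y")
        case True
        then show ?thesis unfolding EW_def using sgE(2)[OF sg] by simp
      next
        case False
        have Exy: "E x y" using rc_clique[OF sg iC i(2)] j(2) \<open>i = j\<close> False by simp
        have "f x \<noteq> f y" using injf x y False inj_on_def by metis
        then have "EW (f x) (f y)"
        proof (cases "fst (f x) = fst (f y)")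
          case True
          then show ?thesis using \<open>f x \<noteq> f y\<close> unfolding EW_def by (simp add: prod_eq_iff)
        next
          case False
          then show ?thesis using rc_clique[OF sg iC fx] fy \<open>i = j\<close> unfolding EW_def by simp
        qed
        then show ?thesis using Exy by simp
      qed
    next
      case False
      have dK: "distinct Ks" using o unfolding repl_ordering_def by blast
      have ne: "Ks!i \<noteq> Ks!j" using nth_eq_iff_index_eq[OF dK i(1) j(1)] False by simp
      have "fst (f x) \<noteq> fst (f y)"
      proof
        assume "fst (f x) = fst (f y)"
        then have "fst (f x) \<in> Ks!i \<inter> Ks!j" using fx fy by simp
        then show False using ord_disj[OF sg o i(1) j(1) False] by simp
      qed
      then have "EW (f x) (f y) = E (fst (f x)) (fst (f y))" unfolding EW_def by simp
      also have "\<dots> = E x y" using rc_unif[OF sg iC jC ne fx i(2) fy j(2)] .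
      finally show ?thesis .
    qed
  qed
  show ?thesis using P1 P2 f2' by blast
qed


lemma part1:
  assumes sg: "simple_graph V E" and o: "repl_ordering V E Ks"
  shows "rho V E \<le> card V + total_nonedges E Ks"
proof -
  define rep where "rep = (\<lambda>k. SOME v. v \<in> Ks!k)"
  define ex where "ex = (\<lambda>v. \<Sum>k<length Ks. if v = rep k then nonedges_before E Ks k else 0)"
  define w where "w = (\<lambda>v. Suc (ex v))"
  define W where "W = Sigma V (\<lambda>v. {..<w v})"
  define EW where "EW = (\<lambda>p q. E (fst (p::'a\<times>nat)) (fst q) \<or> (fst p = fst q \<and> snd p \<noteq> snd q))"
  have fV: "finite V" using sgE(5)[OF sg] .
  have repK: "rep k \<in> Ks!k" if "k < length Ks" for k
    unfolding rep_def using rc_nonempty[OF ord_mem[OF o that]] by (rule someI_ex)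
  have repV: "rep k \<in> V" if "k < length Ks" for k
    using repK[OF that] rc_sub[OF ord_mem[OF o that]] by blast
  have wK: "card (Ks!k) + nonedges_before E Ks k \<le> (\<Sum>u\<in>Ks!k. w u)" if kl: "k < length Ks" for k
  proof -
    have fK: "finite (Ks!k)" using rc_finite[OF sg ord_mem[OF o kl]] .
    have "(\<Sum>u\<in>Ks!k. w u) = (\<Sum>u\<in>Ks!k. ex u) + card (Ks!k)" unfolding w_def by (simp add: sum_Suc)
    moreover have "ex (rep k) \<le> (\<Sum>u\<in>Ks!k. ex u)"
      by (rule member_le_sum[OF repK[OF kl] _ fK]) simp
    moreover have "nonedges_before E Ks k \<le> ex (rep k)"
    proof -
      have "(if rep k = rep k then nonedges_before E Ks k else 0)
            \<le> (\<Sum>k'<length Ks. if rep k = rep k' then nonedges_before E Ks k' else 0)"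
        by (rule member_le_sum[where i = k]) (use kl in auto)
      then show ?thesis unfolding ex_def by simp
    qed
    ultimately show ?thesis by linarith
  qed
  have cardW: "card W = card V + total_nonedges E Ks"
  proof -
    have "card W = (\<Sum>v\<in>V. w v)" unfolding W_def using fV by (simp add: card_SigmaI)
    also have "\<dots> = (\<Sum>v\<in>V. ex v) + card V" unfolding w_def by (simp add: sum_Suc)
    also have "(\<Sum>v\<in>V. ex v) = (\<Sum>k<length Ks. \<Sum>v\<in>V. if v = rep k then nonedges_before E Ks k else 0)"
      unfolding ex_def by (rule sum.swap)
    also have "\<dots> = (\<Sum>k<length Ks. nonedges_before E Ks k)"
      by (rule sum.cong[OF refl]) (simp add: sum.delta[OF fV] repV)
    finally show ?thesis unfolding total_nonedges_def by simp
  qed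
  have fW: "finite W" unfolding W_def using fV by simp
  obtain h where h: "bij_betw h W {0..<card W}" using ex_bij_betw_finite_nat[OF fW] by blast
  define m where "m = card W"
  define hi where "hi = inv_into W h"
  have hinj: "inj_on h W" using bij_betw_imp_inj_on[OF h] .
  have hm: "h p < m" if "p \<in> W" for p using bij_betwE[OF h] that unfolding m_def by auto
  have hih: "hi (h p) = p" if "p \<in> W" for p unfolding hi_def using inv_into_f_f[OF hinj that] .
  define EG where "EG = (\<lambda>i j. i < m \<and> j < m \<and> EW (hi i) (hi j))"
  have sgG: "simple_graph {..<m} EG"
    unfolding simple_graph_def EG_def EW_def using sgE(1,2)[OF sg] by auto
  have propG: "\<forall>c. proper_coloring {..<m} EG c \<longrightarrow> has_rainbow_induced_copy V E {..<m} EG c"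
  proof (intro allI impI)
    fix c assume pc: "proper_coloring {..<m} EG c"
    have pc': "proper_coloring W EW (c \<circ> h)"
      unfolding proper_coloring_def
    proof (intro ballI impI)
      fix p q assume p: "p \<in> W" and q: "q \<in> W" and e: "EW p q"
      have "EG (h p) (h q)" unfolding EG_def using hm[OF p] hm[OF q] hih[OF p] hih[OF q] e by simp
      then show "(c \<circ> h) p \<noteq> (c \<circ> h) q" using pc hm[OF p] hm[OF q] unfolding proper_coloring_def by simp
    qed
    obtain f where f1: "\<forall>x\<in>V. f x \<in> W" and f2: "\<forall>x\<in>V. \<forall>y\<in>V. EW (f x) (f y) = E x y"
      and f3: "inj_on ((c \<circ> h) \<circ> f) V"
      using greedy[OF sg o W_def wK EW_def pc'] by blast
    have i1: "inj_on (c \<circ> (h \<circ> f)) V" using f3 by (simp add: o_assoc)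
    have "inj_on (h \<circ> f) V" using inj_on_imageI2[OF i1] .
    moreover have "(h \<circ> f) ` V \<subseteq> {..<m}"
    proof
      fix i assume "i \<in> (h \<circ> f) ` V"
      then obtain x where "x \<in> V" "i = h (f x)" by auto
      then show "i \<in> {..<m}" using hm f1 by simp
    qed
    moreover have "\<forall>x\<in>V. \<forall>y\<in>V. EG ((h \<circ> f) x) ((h \<circ> f) y) = E x y"
    proof (intro ballI)
      fix x y assume x: "x \<in> V" and y: "y \<in> V"
      show "EG ((h \<circ> f) x) ((h \<circ> f) y) = E x y"
        using f1 f2 hm[of "f x"] hm[of "f y"] hih[of "f x"] hih[of "f y"] x y unfolding EG_def by simp
    qed
    ultimately show "has_rainbow_induced_copy V E {..<m} EG c"
      unfolding has_rainbow_induced_copy_def using i1 by blast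
  qed
  have "rho V E \<le> m"
    unfolding rho_def by (rule Least_le) (use sgG propG in blast)
  then show ?thesis using cardW m_def by simp
qed


definition phi :: "('a \<Rightarrow> 'a \<Rightarrow> bool) \<Rightarrow> 'a set \<Rightarrow> 'a set \<Rightarrow> nat" where
  "phi E A B = (if \<not> E (SOME v. v \<in> B) (SOME v. v \<in> A) then card A else 0)"

definition before :: "'a set list \<Rightarrow> 'a set \<Rightarrow> 'a set \<Rightarrow> bool" where
  "before L A B \<longleftrightarrow> (\<exists>i j. i < j \<and> j < length L \<and> L!i = A \<and> L!j = B)"

lemma nb_decomp:
  assumes sg: "simple_graph V E" and o: "repl_ordering V E L" and jl: "j < length L"
  shows "nonedges_before E L j = (\<Sum>i<j. phi E (L!i) (L!j))"
proof -
  define v where "v = (SOME v. v \<in> L!j)"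
  have jC: "L!j \<in> repl_cliques V E" using ord_mem[OF o jl] .
  have vK: "v \<in> L!j" unfolding v_def using rc_nonempty[OF jC] by (rule someI_ex)
  have disj: "z \<notin> L!j" if "z \<in> L!i" "i < j" for z i
    using ord_disj[OF sg o, of i j] that jl by auto
  have eq: "{z \<in> \<Union>(set (take j L)). z \<noteq> v \<and> \<not> E v z} = (\<Union>i\<in>{..<j}. {z \<in> L!i. \<not> E v z})"
  proof (rule set_eqI)
    fix z
    have "(z \<in> \<Union>(set (take j L))) = (\<exists>i<j. z \<in> L!i)" using U_take[of j L z] jl by simp
    then show "(z \<in> {z \<in> \<Union>(set (take j L)). z \<noteq> v \<and> \<not> E v z}) = (z \<in> (\<Union>i\<in>{..<j}. {z \<in> L!i. \<not> E v z}))"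
      using disj vK by auto
  qed
  have cards: "card {z \<in> L!i. \<not> E v z} = phi E (L!i) (L!j)" if il: "i < j" for i
  proof -
    have iC: "L!i \<in> repl_cliques V E" using ord_mem[OF o] il jl by simp
    define r where "r = (SOME v. v \<in> L!i)"
    have rK: "r \<in> L!i" unfolding r_def using rc_nonempty[OF iC] by (rule someI_ex)
    have ne: "L!j \<noteq> L!i" using disj[OF rK il] rK by blast
    have "E v z = E v r" if "z \<in> L!i" for z using rc_unif[OF sg jC iC ne vK vK that rK] .
    then have "{z \<in> L!i. \<not> E v z} = (if \<not> E v r then L!i else {})" by auto
    then show ?thesis unfolding phi_def v_def[symmetric] r_def[symmetric] by simp
  qed
  have "nonedges_before E L j = card (\<Union>i\<in>{..<j}. {z \<in> L!i. \<not> E v z})"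
    unfolding nonedges_before_def v_def[symmetric] eq ..
  also have "\<dots> = (\<Sum>i<j. card {z \<in> L!i. \<not> E v z})"
  proof (rule card_UN_disjoint)
    show "finite {..<j}" by simp
    show "\<forall>i\<in>{..<j}. finite {z \<in> L ! i. \<not> E v z}"
      using rc_finite[OF sg ord_mem[OF o]] jl by simp
    show "\<forall>i\<in>{..<j}. \<forall>i'\<in>{..<j}. i \<noteq> i' \<longrightarrow> {z \<in> L ! i. \<not> E v z} \<inter> {z \<in> L ! i'. \<not> E v z} = {}"
    proof (intro ballI impI)
      fix i i' assume i: "i \<in> {..<j}" and i': "i' \<in> {..<j}" and ne: "i \<noteq> i'"
      have "L!i \<inter> L!i' = {}" using ord_disj[OF sg o _ _ ne] i i' jl by simp
      then show "{z \<in> L ! i. \<not> E v z} \<inter> {z \<in> L ! i'. \<not> E v z} = {}" by blast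
    qed
  qed
  also have "\<dots> = (\<Sum>i<j. phi E (L!i) (L!j))" using cards by simp
  finally show ?thesis .
qed

lemma sum_set_nth: "distinct L \<Longrightarrow> (\<Sum>A\<in>set L. g A) = (\<Sum>i<length L. g (L!i))"
proof -
  assume d: "distinct L"
  have "set L = nth L ` {..<length L}" using nth_image[of "length L" L] by (simp add: lessThan_atLeast0)
  moreover have "inj_on (nth L) {..<length L}" by (rule inj_on_nth[OF d]) simp
  ultimately show ?thesis by (simp add: sum.reindex)
qed

lemma before_nth: assumes d: "distinct L" and i: "i < length L" and j: "j < length L"
  shows "before L (L!i) (L!j) = (i < j)"
proof
  assume "before L (L!i) (L!j)"
  then obtain i' j' where h: "i' < j'" "j' < length L" "L!i' = L!i" "L!j' = L!j" unfolding before_def by blast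
  have "i' = i" using nth_eq_iff_index_eq[OF d _ i, of i'] h by simp
  moreover have "j' = j" using nth_eq_iff_index_eq[OF d h(2) j] h by simp
  ultimately show "i < j" using h by simp
next
  assume "i < j" then show "before L (L!i) (L!j)" unfolding before_def using j by blast
qed

lemma total_pairs:
  assumes sg: "simple_graph V E" and o: "repl_ordering V E L"
  shows "total_nonedges E L = (\<Sum>B\<in>repl_cliques V E. \<Sum>A\<in>repl_cliques V E. if before L A B then phi E A B else 0)"
proof -
  have d: "distinct L" and s: "set L = repl_cliques V E" using o unfolding repl_ordering_def by auto
  have "total_nonedges E L = (\<Sum>j<length L. \<Sum>i<j. phi E (L!i) (L!j))"
    unfolding total_nonedges_def using nb_decomp[OF sg o] by simp
  also have "\<dots> = (\<Sum>j<length L. \<Sum>i<length L. if before L (L!i) (L!j) then phi E (L!i) (L!j) else 0)"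
  proof (rule sum.cong[OF refl])
    fix j assume j: "j \<in> {..<length L}"
    have "{i \<in> {..<length L}. i < j} = {..<j}" using j by auto
    then have "(\<Sum>i<j. phi E (L!i) (L!j)) = (\<Sum>i<length L. if i < j then phi E (L!i) (L!j) else 0)"
      using sum.inter_filter[of "{..<length L}" "\<lambda>i. phi E (L!i) (L!j)" "\<lambda>i. i < j"] by simp
    also have "\<dots> = (\<Sum>i<length L. if before L (L!i) (L!j) then phi E (L!i) (L!j) else 0)"
      using before_nth[OF d] j by simp
    finally show "(\<Sum>i<j. phi E (L!i) (L!j)) = \<dots>" .
  qed
  also have "\<dots> = (\<Sum>B\<in>set L. \<Sum>A\<in>set L. if before L A B then phi E A B else 0)"
    by (simp add: sum_set_nth[OF d])
  finally show ?thesis using s by simp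
qed

lemma before_facts:
  assumes d: "distinct L" and A: "A \<in> set L" and B: "B \<in> set L"
  shows "\<not> before L A A" "A \<noteq> B \<Longrightarrow> before L A B \<or> before L B A" "before L A B \<Longrightarrow> \<not> before L B A"
    "sorted (map card L) \<Longrightarrow> before L A B \<Longrightarrow> card A \<le> card B"
proof -
  obtain i where i: "i < length L" "A = L!i" using A by (metis in_set_conv_nth)
  obtain j where j: "j < length L" "B = L!j" using B by (metis in_set_conv_nth)
  show "\<not> before L A A" using before_nth[OF d i(1) i(1)] i by simp
  show "A \<noteq> B \<Longrightarrow> before L A B \<or> before L B A" using before_nth[OF d i(1) j(1)] before_nth[OF d j(1) i(1)] i j
    by (metis linorder_neqE_nat)
  show "before L A B \<Longrightarrow> \<not> before L B A" using before_nth[OF d i(1) j(1)] before_nth[OF d j(1) i(1)] i j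
    by simp
  show "sorted (map card L) \<Longrightarrow> before L A B \<Longrightarrow> card A \<le> card B"
  proof -
    assume so: "sorted (map card L)" and b: "before L A B"
    then have "i < j" using before_nth[OF d i(1) j(1)] i j by simp
    then have "map card L ! i \<le> map card L ! j" using sorted_nth_mono[OF so, of i j] j by simp
    then show "card A \<le> card B" using i j by simp
  qed
qed

lemma part2:
  assumes sg: "simple_graph V E" and o: "repl_ordering V E Ks" and o': "repl_ordering V E Ks'"
    and so: "sorted (map card Ks')"
  shows "total_nonedges E Ks' \<le> total_nonedges E Ks"
proof -
  define C where "C = repl_cliques V E"
  define g where "g = (\<lambda>L A B. if before L A B then phi E A B else 0)"
  have d: "distinct Ks" and s: "set Ks = C" using o unfolding repl_ordering_def C_def by auto
  have d': "distinct Ks'" and s': "set Ks' = C" using o' unfolding repl_ordering_def C_def by auto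
  have tp: "total_nonedges E L = (\<Sum>B\<in>C. \<Sum>A\<in>C. g L A B)" if "repl_ordering V E L" for L
    using total_pairs[OF sg that] unfolding C_def g_def by simp
  have two: "2 * total_nonedges E L = (\<Sum>B\<in>C. \<Sum>A\<in>C. g L A B + g L B A)" if "repl_ordering V E L" for L
  proof -
    have "(\<Sum>B\<in>C. \<Sum>A\<in>C. g L B A) = (\<Sum>B\<in>C. \<Sum>A\<in>C. g L A B)" by (rule sum.swap)
    then show ?thesis using tp[OF that] by (simp add: sum.distrib)
  qed
  have pair: "g Ks' A B + g Ks' B A \<le> g Ks A B + g Ks B A" if A: "A \<in> C" and B: "B \<in> C" for A B
  proof (cases "A = B")
    case True
    then show ?thesis using before_facts(1)[OF d' A[folded s'] A[folded s']] unfolding g_def by simp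
  next
    case False
    have sym: "E (SOME v. v \<in> B) (SOME v. v \<in> A) = E (SOME v. v \<in> A) (SOME v. v \<in> B)"
      using sgE(1)[OF sg] by blast
    note f' = before_facts[OF d' A[folded s'] B[folded s']] before_facts[OF d' B[folded s'] A[folded s']]
    note f = before_facts[OF d A[folded s] B[folded s]] before_facts[OF d B[folded s] A[folded s]]
    show ?thesis
    proof (cases "E (SOME v. v \<in> B) (SOME v. v \<in> A)")
      case True
      then show ?thesis unfolding g_def phi_def using sym by simp
    next
      case nE: False
      have pAB: "phi E A B = card A" "phi E B A = card B" unfolding phi_def using nE sym by auto
      have "g Ks' A B + g Ks' B A \<le> min (card A) (card B)"
        using f'(2)[OF False] f'(3) f'(4)[OF so] f'(8)[OF so] unfolding g_def pAB by auto
      moreover have "min (card A) (card B) \<le> g Ks A B + g Ks B A"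
        using f(2)[OF False] f(3) unfolding g_def pAB by auto
      ultimately show ?thesis by linarith
    qed
  qed
  have "2 * total_nonedges E Ks' \<le> 2 * total_nonedges E Ks"
    unfolding two[OF o] two[OF o'] by (intro sum_mono pair)
  then show ?thesis by simp
qed

theorem theorem3p1:
  fixes V :: "'a set" and E :: "'a \<Rightarrow> 'a \<Rightarrow> bool" and Ks :: "'a set list"
  assumes "simple_graph V E"
    and "repl_ordering V E Ks"
  shows "rho V E \<le> card V + total_nonedges E Ks
    \<and> (\<forall>Ks'. repl_ordering V E Ks' \<and> sorted (map card Ks')
           \<longrightarrow> total_nonedges E Ks' \<le> total_nonedges E Ks)"
  using part1[OF assms] part2[OF assms] by blast

end
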